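(* Let $G_0$ be a locally compact totally disconnected group, and let $C,D\subset G_0$ be closed subgroups, each isomorphic (as topological groups) to $F^m$ for some $m$, in duality via a non-degenerate $F$-bilinear pairing $\langle\cdot,\cdot\rangle':C\times D\to F$. Let $\chi$ be a continuous character of $D$, and let $f$ be a function on $G_0$ right-invariant under some open compact subgroup such that $f(cd)=f(c)\chi(d)\psi(\langle c,d\rangle')$ for all $c\in C$, $d\in D$. Then $f|_C$ is compactly supported. Moreover, if $f$ is right-invariant under a fixed open compact subgroup $K_0$ and $\langle\cdot,\cdot\rangle'$ ranges over a compact set $\tilde\Omega$ of non-degenerate pairings, then the support of $f|_C$ is contained in a compact set depending only on $K_0$, $\tilde\Omega$ and the conductor of $\chi$.
   Context: $F$ is a $p$-adic field and $\psi$ a nontrivial continuous additive character of $F$. *)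

theory Defs
  imports "HOL-Analysis.Analysis" "HOL-Algebra.Group"
begin

definition totally_disconnected_space :: "'a topology \<Rightarrow> bool" where
  "totally_disconnected_space X \<longleftrightarrow> (\<forall>S. connectedin X S \<longrightarrow> (\<exists>a. S \<subseteq> {a}))"

(* A p-adic field (finite extension of Q_p), characterised as a non-discrete, Hausdorff,
   locally compact, totally disconnected topological field of characteristic 0. *)
definition p_adic_field :: "('f::{field,topological_space}) itself \<Rightarrow> bool" where
  "p_adic_field _ \<longleftrightarrow>
     continuous_on UNIV (\<lambda>p::'f \<times> 'f. fst p + snd p) \<and>
     continuous_on UNIV (\<lambda>p::'f \<times> 'f. fst p * snd p) \<and>
     continuous_on UNIV (\<lambda>x::'f. - x) \<and>
     continuous_on (UNIV - {0}) (\<lambda>x::'f. inverse x) \<and>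
     Hausdorff_space (euclidean :: 'f topology) \<and>
     locally_compact_space (euclidean :: 'f topology) \<and>
     totally_disconnected_space (euclidean :: 'f topology) \<and>
     \<not> open {0::'f} \<and>
     CHAR('f) = 0"

definition nontrivial_additive_character :: "('f::{field,topological_space} \<Rightarrow> complex) \<Rightarrow> bool" where
  "nontrivial_additive_character \<psi> \<longleftrightarrow>
     continuous_on UNIV \<psi> \<and> (\<forall>x y. \<psi> (x + y) = \<psi> x * \<psi> y) \<and>
     (\<forall>x. norm (\<psi> x) = 1) \<and> (\<exists>x. \<psi> x \<noteq> 1)"

definition lctd_group :: "('g, 'b) monoid_scheme \<Rightarrow> 'g topology \<Rightarrow> bool" where
  "lctd_group G X \<longleftrightarrow> group G \<and> topspace X = carrier G \<and>
     continuous_map (prod_topology X X) X (\<lambda>p. fst p \<otimes>\<^bsub>G\<^esub> snd p) \<and>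
     continuous_map X X (\<lambda>x. inv\<^bsub>G\<^esub> x) \<and>
     locally_compact_space X \<and> totally_disconnected_space X"

definition open_compact_subgroup :: "('g, 'b) monoid_scheme \<Rightarrow> 'g topology \<Rightarrow> 'g set \<Rightarrow> bool" where
  "open_compact_subgroup G X K \<longleftrightarrow> subgroup K G \<and> openin X K \<and> compactin X K"

definition top_group_iso_onto ::
  "('g, 'b) monoid_scheme \<Rightarrow> 'g topology \<Rightarrow> ('f::{field,topological_space}^'m::finite \<Rightarrow> 'g) \<Rightarrow> 'g set \<Rightarrow> bool" where
  "top_group_iso_onto G X \<phi> C \<longleftrightarrow>
     bij_betw \<phi> UNIV C \<and> (\<forall>x y. \<phi> (x + y) = \<phi> x \<otimes>\<^bsub>G\<^esub> \<phi> y) \<and>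
     homeomorphic_map euclidean (subtopology X C) \<phi>"

definition F_bilinear :: "('f::field^'m \<Rightarrow> 'f^'n \<Rightarrow> 'f) \<Rightarrow> bool" where
  "F_bilinear B \<longleftrightarrow>
     (\<forall>x x' y. B (x + x') y = B x y + B x' y) \<and>
     (\<forall>x y y'. B x (y + y') = B x y + B x y') \<and>
     (\<forall>a x y. B (a *s x) y = a * B x y) \<and>
     (\<forall>a x y. B x (a *s y) = a * B x y)"

definition nondegenerate_pairing :: "('a::zero \<Rightarrow> 'b::zero \<Rightarrow> 'f::zero) \<Rightarrow> bool" where
  "nondegenerate_pairing B \<longleftrightarrow>
     (\<forall>x. (\<forall>y. B x y = 0) \<longrightarrow> x = 0) \<and> (\<forall>y. (\<forall>x. B x y = 0) \<longrightarrow> y = 0)"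

definition pairing_of_matrix :: "'f::field^'m::finite^'m \<Rightarrow> 'f^'m \<Rightarrow> 'f^'m \<Rightarrow> 'f" where
  "pairing_of_matrix M x y = (\<Sum>i\<in>UNIV. \<Sum>j\<in>UNIV. x $ i * M $ i $ j * y $ j)"

definition continuous_character :: "('g, 'b) monoid_scheme \<Rightarrow> 'g topology \<Rightarrow> 'g set \<Rightarrow> ('g \<Rightarrow> complex) \<Rightarrow> bool" where
  "continuous_character G X D chi \<longleftrightarrow>
     (\<forall>d\<in>D. \<forall>d'\<in>D. chi (d \<otimes>\<^bsub>G\<^esub> d') = chi d * chi d') \<and> (\<forall>d\<in>D. norm (chi d) = 1) \<and>
     continuous_map (subtopology X D) euclidean chi"

definition right_invariant :: "('g, 'b) monoid_scheme \<Rightarrow> 'g set \<Rightarrow> ('g \<Rightarrow> 'c) \<Rightarrow> bool" where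
  "right_invariant G K f \<longleftrightarrow> (\<forall>g\<in>carrier G. \<forall>k\<in>K. f (g \<otimes>\<^bsub>G\<^esub> k) = f g)"

end

theory Submission
  imports Defs
begin


lemma pf_add:
  assumes F: "p_adic_field TYPE('f::{field,topological_space})"
    and f: "continuous_on S f" and g: "continuous_on S g"
  shows "continuous_on S (\<lambda>x. (f x::'f) + g x)"
proof -
  have c: "continuous_on UNIV (\<lambda>p::'f \<times> 'f. fst p + snd p)" using F by (simp add: p_adic_field_def)
  show ?thesis using continuous_on_compose2[OF c continuous_on_Pair[OF f g]] by simp
qed

lemma pf_mult:
  assumes F: "p_adic_field TYPE('f::{field,topological_space})"
    and f: "continuous_on S f" and g: "continuous_on S g"
  shows "continuous_on S (\<lambda>x. (f x::'f) * g x)"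
proof -
  have c: "continuous_on UNIV (\<lambda>p::'f \<times> 'f. fst p * snd p)" using F by (simp add: p_adic_field_def)
  show ?thesis using continuous_on_compose2[OF c continuous_on_Pair[OF f g]] by simp
qed

lemma pf_inverse:
  assumes F: "p_adic_field TYPE('f::{field,topological_space})"
    and f: "continuous_on S f" and nz: "\<And>x. x \<in> S \<Longrightarrow> f x \<noteq> (0::'f)"
  shows "continuous_on S (\<lambda>x. inverse (f x))"
proof -
  have c: "continuous_on (UNIV - {0}) (\<lambda>x::'f. inverse x)" using F by (simp add: p_adic_field_def)
  show ?thesis by (rule continuous_on_compose2[OF c f]) (use nz in auto)
qed

lemma pf_sum:
  assumes F: "p_adic_field TYPE('f::{field,topological_space})"
    and fin: "finite I" and f: "\<And>i. i \<in> I \<Longrightarrow> continuous_on S (f i)"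
  shows "continuous_on S (\<lambda>x. \<Sum>i\<in>I. (f i x::'f))"
  using fin f
proof (induction I rule: finite_induct)
  case empty then show ?case by (simp add: continuous_on_const)
next
  case (insert a I)
  then show ?case by (simp add: pf_add[OF F])
qed

lemma pf_prod:
  assumes F: "p_adic_field TYPE('f::{field,topological_space})"
    and fin: "finite I" and f: "\<And>i. i \<in> I \<Longrightarrow> continuous_on S (f i)"
  shows "continuous_on S (\<lambda>x. \<Prod>i\<in>I. (f i x::'f))"
  using fin f
proof (induction I rule: finite_induct)
  case empty then show ?case by (simp add: continuous_on_const)
next
  case (insert a I)
  then show ?case by (simp add: pf_mult[OF F])
qed

lemma pf_open_vimage:
  assumes "continuous_on UNIV f" "open B"
  shows "open (f -` B)"
  using assms continuous_on_open_vimage[of UNIV f] by auto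

lemma pf_closed_vimage:
  assumes "continuous_on UNIV f" "closed B"
  shows "closed (f -` B)"
  using assms continuous_on_closed_vimage[of UNIV f] by auto



lemma pf_hausdorff_sep:
  assumes F: "p_adic_field TYPE('f::{field,topological_space})" and "(x::'f) \<noteq> y"
  obtains U V where "open U" "open V" "x \<in> U" "y \<in> V" "U \<inter> V = {}"
proof -
  have H: "Hausdorff_space (euclidean :: 'f topology)" using F unfolding p_adic_field_def by (elim conjE)
  have "\<exists>U V. openin euclidean U \<and> openin euclidean V \<and> x \<in> U \<and> y \<in> V \<and> disjnt U V"
    using H assms(2) unfolding Hausdorff_space_def by simp
  then show ?thesis using that unfolding disjnt_def by auto
qed

lemma pf_closed_sing:
  assumes F: "p_adic_field TYPE('f::{field,topological_space})"
  shows "closed {a::'f}"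
proof -
  have "open (- {a})"
  unfolding open_subopen[of "- {a}"]
  proof
    fix x assume "x \<in> - {a}"
    then have "x \<noteq> a" by simp
    then obtain U V where UV: "open U" "open V" "x \<in> U" "a \<in> V" "U \<inter> V = {}"
      by (rule pf_hausdorff_sep[OF F])
    have "U \<subseteq> - {a}" using UV(4,5) by blast
    then show "\<exists>T. open T \<and> x \<in> T \<and> T \<subseteq> - {a}" using UV(1,3) by blast
  qed
  then show ?thesis by (simp only: closed_def)
qed

lemma pf_compact_closed:
  assumes F: "p_adic_field TYPE('f::{field,topological_space})" and "compact (N::'f set)"
  shows "closed N"
proof -
  have "Hausdorff_space (euclidean::'f topology)" using F by (simp add: p_adic_field_def)
  then show ?thesis using compactin_imp_closedin[of "euclidean::'f topology" N] assms by simp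
qed

lemma pf_nilp:
  fixes N :: "'f::{field,topological_space} set"
  assumes F: "p_adic_field TYPE('f)"
    and N: "compact N" "1 \<notin> N" "\<pi> \<in> N" "\<pi> \<noteq> 0" "\<forall>x\<in>N. \<pi> * x \<in> N"
    and U: "open U" "0 \<in> U"
  shows "\<exists>k0. \<forall>k\<ge>k0. \<pi> ^ k \<in> U"
proof -
  have Ncl: "closed N" using pf_compact_closed[OF F N(1)] .
  have powN: "\<pi> ^ Suc j \<in> N" for j
  proof (induction j)
    case 0 then show ?case using N(3) by simp
  next
    case (Suc j)
    have "\<pi> ^ Suc (Suc j) = \<pi> * \<pi> ^ Suc j" by simp
    then show ?case using N(5) Suc by metis
  qed
  let ?T = "(- {0::'f}) \<times> (- {0::'f})"
  let ?g = "\<lambda>p::'f\<times>'f. fst p * inverse (snd p)"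
  have oT: "open ?T" using pf_closed_sing[OF F] by (intro open_Times) auto
  have cg: "continuous_on ?T ?g"
  proof (rule pf_mult[OF F])
    show "continuous_on ?T (\<lambda>p::'f\<times>'f. fst p)" by (rule continuous_on_fst[OF continuous_on_id])
    show "continuous_on ?T (\<lambda>p::'f\<times>'f. inverse (snd p))"
      by (rule pf_inverse[OF F continuous_on_snd[OF continuous_on_id]]) auto
  qed
  have oG: "open (?g -` (- N) \<inter> ?T)"
  proof -
    have "open (- N)" using Ncl by (simp add: open_Compl)
    then show ?thesis using cg oT continuous_on_open_vimage[of ?T ?g] by blast
  qed
  have "\<exists>P. open P \<and> y \<in> P \<and> (\<forall>k k'. \<pi>^k \<in> P \<longrightarrow> \<pi>^k' \<in> P \<longrightarrow> k = k')" if y: "y \<noteq> 0" for y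
  proof -
    have yy: "(y, y) \<in> ?g -` (- N) \<inter> ?T" using y N(2) by simp
    obtain A B where AB: "open A" "open B" "(y,y) \<in> A \<times> B" "A \<times> B \<subseteq> ?g -` (- N) \<inter> ?T"
      by (rule open_prod_elim[OF oG yy])
    have key: False if "\<pi>^k \<in> A \<inter> B" "\<pi>^k' \<in> A \<inter> B" "k < k'" for k k'
    proof -
      have "(\<pi>^k', \<pi>^k) \<in> A \<times> B" using that by auto
      then have "(\<pi>^k', \<pi>^k) \<in> ?g -` (- N)" using AB(4) by blast
      then have nN: "\<pi>^k' * inverse (\<pi>^k) \<notin> N" by simp
      have e: "\<pi>^k' = \<pi>^k * \<pi> ^ Suc (k' - k - 1)"
      proof -
        have "k' = k + Suc (k' - k - 1)" using that(3) by simp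
        then show ?thesis by (metis power_add)
      qed
      have nz: "\<pi>^k \<noteq> 0" using N(4) by simp
      have "\<pi>^k' * inverse (\<pi>^k) = (\<pi>^k * \<pi> ^ Suc (k' - k - 1)) / \<pi>^k"
        by (simp only: e divide_inverse)
      also have "\<dots> = \<pi> ^ Suc (k' - k - 1)" using nz by (rule nonzero_mult_div_cancel_left)
      finally have "\<pi>^k' * inverse (\<pi>^k) \<in> N" using powN[of "k' - k - 1"] by simp
      then show False using nN by blast
    qed
    have "\<forall>k k'. \<pi>^k \<in> A \<inter> B \<longrightarrow> \<pi>^k' \<in> A \<inter> B \<longrightarrow> k = k'"
    proof (intro allI impI)
      fix k k' assume h: "\<pi>^k \<in> A \<inter> B" "\<pi>^k' \<in> A \<inter> B"
      show "k = k'"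
      proof (rule linorder_cases[of k k'])
        assume "k < k'" then show ?thesis using key[OF h] by blast
      next
        assume "k' < k" then show ?thesis using key[OF h(2) h(1)] by blast
      qed
    qed
    moreover have "open (A \<inter> B)" using AB(1,2) by (rule open_Int)
    moreover have "y \<in> A \<inter> B" using AB(3) by blast
    ultimately show ?thesis by blast
  qed
  then have ex: "\<forall>y. \<exists>P. y \<noteq> 0 \<longrightarrow> open P \<and> y \<in> P \<and> (\<forall>k k'. \<pi>^k \<in> P \<longrightarrow> \<pi>^k' \<in> P \<longrightarrow> k = k')"
    by blast
  obtain P where P0: "\<forall>y. y \<noteq> 0 \<longrightarrow> open (P y) \<and> y \<in> P y \<and> (\<forall>k k'. \<pi>^k \<in> P y \<longrightarrow> \<pi>^k' \<in> P y \<longrightarrow> k = k')"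
    using choice[OF ex] by blast
  have P: "open (P y) \<and> y \<in> P y \<and> (\<forall>k k'. \<pi>^k \<in> P y \<longrightarrow> \<pi>^k' \<in> P y \<longrightarrow> k = k')" if "y \<noteq> 0" for y
    using P0 that by blast
  have cNU: "compact (N \<inter> - U)" using compact_Int_closed[OF N(1) closed_Compl[OF U(1)]] .
  have cov: "N \<inter> - U \<subseteq> (\<Union>y\<in>N \<inter> - U. P y)"
  proof
    fix y assume "y \<in> N \<inter> - U"
    then have "y \<noteq> 0" "y \<in> N \<inter> - U" using U(2) by auto
    then show "y \<in> (\<Union>y\<in>N \<inter> - U. P y)" using P[of y] by blast
  qed
  have opP: "open (P T)" if "T \<in> N \<inter> - U" for T using that U(2) P[of T] by auto
  obtain C' where C': "C' \<subseteq> N \<inter> - U" "finite C'" "N \<inter> - U \<subseteq> (\<Union>y\<in>C'. P y)"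
    by (rule compactE_image[OF cNU opP cov])
  have fin1: "finite {k. \<pi>^k \<in> P y}" if yC: "y \<in> C'" for y
  proof -
    have "y \<in> N \<inter> - U" using yC C'(1) by blast
    then have "y \<noteq> 0" using U(2) by blast
    then have uniq: "\<forall>k k'. \<pi>^k \<in> P y \<longrightarrow> \<pi>^k' \<in> P y \<longrightarrow> k = k'" using P[of y] by blast
    show ?thesis
    proof (cases "{k. \<pi>^k \<in> P y} = {}")
      case True then show ?thesis by (simp only: finite.emptyI)
    next
      case False
      then obtain a where a: "\<pi>^a \<in> P y" by blast
      have "{k. \<pi>^k \<in> P y} \<subseteq> {a}" using uniq a by blast
      then show ?thesis by (rule finite_subset) simp
    qed
  qed
  have sub: "{k. \<pi>^Suc k \<notin> U} \<subseteq> (\<lambda>k. k - 1) ` (\<Union>y\<in>C'. {k. \<pi>^k \<in> P y})"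
  proof
    fix k assume "k \<in> {k. \<pi>^Suc k \<notin> U}"
    then have "\<pi>^Suc k \<notin> U" by simp
    then have "\<pi>^Suc k \<in> N \<inter> - U" using powN[of k] by blast
    then obtain y where y: "y \<in> C'" "\<pi>^Suc k \<in> P y" using C'(3) by blast
    have "Suc k \<in> (\<Union>y\<in>C'. {k. \<pi>^k \<in> P y})" using y by blast
    moreover have "k = Suc k - 1" by simp
    ultimately show "k \<in> (\<lambda>k. k - 1) ` (\<Union>y\<in>C'. {k. \<pi>^k \<in> P y})" by (rule rev_image_eqI)
  qed
  have "finite (\<Union>y\<in>C'. {k. \<pi>^k \<in> P y})" using C'(2) fin1 by (rule finite_UN_I)
  then have "finite {k. \<pi>^Suc k \<notin> U}" using sub by (meson finite_imageI finite_subset)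
  then obtain b where b: "\<forall>k\<in>{k. \<pi>^Suc k \<notin> U}. k < b"
    using finite_nat_set_iff_bounded by blast
  show ?thesis
  proof (intro exI[of _ "Suc b"] allI impI)
    fix k assume "Suc b \<le> k"
    then obtain j where j: "k = Suc j" "j \<ge> b" by (cases k) auto
    have "\<not> j < b" using j(2) by simp
    then have "\<pi>^Suc j \<in> U" using b by blast
    then show "\<pi>^k \<in> U" using j(1) by simp
  qed
qed



lemma pf_lc1:
  assumes F: "p_adic_field TYPE('f::{field,topological_space})"
  shows "locally_compact_space (euclidean :: 'f topology)"
  using F unfolding p_adic_field_def by (elim conjE)

lemma pf_lc2:
  assumes F: "p_adic_field TYPE('f::{field,topological_space})"
  shows "\<not> open {0::'f}"
  using F unfolding p_adic_field_def by (elim conjE)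

lemma pf_cmul:
  assumes F: "p_adic_field TYPE('f::{field,topological_space})"
  shows "continuous_on S (\<lambda>x::'f. a * x)" "continuous_on S (\<lambda>x::'f. x * a)"
  by (rule pf_mult[OF F continuous_on_const continuous_on_id])
     (rule pf_mult[OF F continuous_on_id continuous_on_const])

lemma pf_bound:
  fixes W :: "'f::{field,topological_space} set"
  assumes F: "p_adic_field TYPE('f)" and W: "open W" "0 \<in> W"
  shows "\<exists>Q. compact Q \<and> (\<forall>c. c \<notin> W \<longrightarrow> inverse c \<in> Q)"
proof -
  have "\<forall>x\<in>topspace (euclidean::'f topology). \<exists>U K. openin euclidean U \<and> compactin euclidean K \<and> x \<in> U \<and> U \<subseteq> K"
    using pf_lc1[OF F] unfolding locally_compact_space_def .
  note lc = this
  have "\<exists>U K. openin euclidean U \<and> compactin euclidean K \<and> (0::'f) \<in> U \<and> U \<subseteq> K"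
    using bspec[OF lc, of "0::'f"] by (simp only: topspace_euclidean UNIV_I simp_thms)
  then obtain U0 K0 :: "'f set" where UK0: "openin euclidean U0" "compactin euclidean K0" "0 \<in> U0" "U0 \<subseteq> K0"
    by blast
  have UK: "open U0" "compact K0" "0 \<in> U0" "U0 \<subseteq> K0"
    using UK0 by (simp_all only: open_openin compactin_euclidean_iff)
  have "(0::'f) \<noteq> 1" by simp
  then obtain A1 B1 :: "'f set" where AB: "open A1" "open B1" "0 \<in> A1" "1 \<in> B1" "A1 \<inter> B1 = {}"
    by (rule pf_hausdorff_sep[OF F])
  define N where "N = K0 \<inter> - B1"
  define Oo where "Oo = U0 \<inter> A1"
  have N: "compact N" unfolding N_def using compact_Int_closed[OF UK(2) closed_Compl[OF AB(2)]] .
  have Oo: "open Oo" "0 \<in> Oo" "Oo \<subseteq> N" "1 \<notin> N"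
    unfolding Oo_def N_def using UK AB by auto
  have Ncl: "closed N" using pf_compact_closed[OF F N] .
  define W0 where "W0 = (\<lambda>p::'f\<times>'f. fst p * snd p) -` Oo"
  have oW0: "open W0" unfolding W0_def
  proof (rule pf_open_vimage[OF _ Oo(1)])
    show "continuous_on UNIV (\<lambda>p::'f\<times>'f. fst p * snd p)" using F unfolding p_adic_field_def by (elim conjE)
  qed
  have "{0} \<times> N \<subseteq> W0"
  proof
    fix p assume "p \<in> {0::'f} \<times> N"
    then have "fst p = 0" by (simp add: mem_Times_iff)
    then have "fst p * snd p \<in> Oo" using Oo(2) by simp
    then show "p \<in> W0" unfolding W0_def by (rule vimageI2)
  qed
  then have "\<exists>X0. 0 \<in> X0 \<and> open X0 \<and> X0 \<times> N \<subseteq> W0"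
    by (rule Elementary_Topology.tube_lemma[OF N oW0])
  then obtain X0 :: "'f set" where X0: "0 \<in> X0" "open X0" "X0 \<times> N \<subseteq> W0"
    by (elim exE conjE) (rule that)
  have XN: "v * n \<in> Oo" if "v \<in> X0" "n \<in> N" for v n
  proof -
    have "(v, n) \<in> X0 \<times> N" using that by (rule mem_Sigma_iff[THEN iffD2, OF conjI])
    then have "(v, n) \<in> W0" using X0(3) by (rule rev_subsetD)
    then show ?thesis unfolding W0_def by simp
  qed
  have "X0 \<inter> Oo \<noteq> {0}"
  proof
    assume "X0 \<inter> Oo = {0}"
    then have "open {0::'f}" using X0(2) Oo(1) by (metis open_Int)
    then show False using pf_lc2[OF F] by blast
  qed
  moreover have "0 \<in> X0 \<inter> Oo" using X0(1) Oo(2) by blast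
  ultimately obtain \<pi> where pi: "\<pi> \<in> X0" "\<pi> \<in> Oo" "\<pi> \<noteq> 0" by blast
  have piN: "\<pi> \<in> N" using pi(2) Oo(3) by blast
  have piO: "\<pi> * x \<in> Oo" if "x \<in> N" for x using XN[OF pi(1) that] .
  have piNN: "\<forall>x\<in>N. \<pi> * x \<in> N" using piO Oo(3) by blast
  have powN: "\<pi> ^ Suc j \<in> N" for j
  proof (induction j)
    case 0 then show ?case using piN by simp
  next
    case (Suc j)
    have "\<pi> ^ Suc (Suc j) = \<pi> * \<pi> ^ Suc j" by simp
    then show ?case using piNN Suc by metis
  qed
  define D0 where "D0 = N \<inter> (\<lambda>x. inverse \<pi> * x) -` (- Oo)"
  have D0c: "compact D0" unfolding D0_def
    by (rule compact_Int_closed[OF N pf_closed_vimage[OF pf_cmul(1)[OF F] closed_Compl[OF Oo(1)]]])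
  have D0nz: "0 \<notin> D0" unfolding D0_def using Oo(2) by simp
  have cinv: "continuous_on D0 inverse"
    by (rule pf_inverse[OF F continuous_on_id]) (use D0nz in auto)
  have Q1c: "compact ((\<lambda>p. fst p * snd p) ` (N \<times> inverse ` D0))"
  proof (rule compact_continuous_image)
    show "continuous_on (N \<times> inverse ` D0) (\<lambda>p::'f\<times>'f. fst p * snd p)"
      by (rule pf_mult[OF F continuous_on_fst[OF continuous_on_id] continuous_on_snd[OF continuous_on_id]])
    show "compact (N \<times> inverse ` D0)"
      by (rule compact_Times[OF N compact_continuous_image[OF cinv D0c]])
  qed
  define NW where "NW = N \<inter> - W"
  have NWc: "compact NW" unfolding NW_def using compact_Int_closed[OF N closed_Compl[OF W(1)]] .
  have NWnz: "0 \<notin> NW" unfolding NW_def using W(2) by simp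
  have cinv2: "continuous_on NW inverse"
    by (rule pf_inverse[OF F continuous_on_id]) (use NWnz in auto)
  have Q2c: "compact (inverse ` NW)" by (rule compact_continuous_image[OF cinv2 NWc])
  have main: "inverse c \<in> (\<lambda>p. fst p * snd p) ` (N \<times> inverse ` D0)" if c: "c \<notin> N" for c
  proof -
    have cnz: "c \<noteq> 0" using c Oo(2,3) by blast
    have "open ((\<lambda>x. x * c) -` Oo)" by (rule pf_open_vimage[OF pf_cmul(2)[OF F] Oo(1)])
    moreover have "0 \<in> (\<lambda>x. x * c) -` Oo" using Oo(2) by simp
    ultimately obtain k0 where k0: "\<forall>k\<ge>k0. \<pi> ^ k \<in> (\<lambda>x. x * c) -` Oo"
      using pf_nilp[OF F N Oo(4) piN pi(3) piNN] by blast
    have ex: "\<exists>k. \<pi> ^ k * c \<in> Oo" using k0 by auto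
    define k where "k = (LEAST k. \<pi> ^ k * c \<in> Oo)"
    have kO: "\<pi> ^ k * c \<in> Oo" unfolding k_def by (rule LeastI_ex[OF ex])
    have k0': "k \<noteq> 0"
    proof
      assume "k = 0"
      then have "c \<in> Oo" using kO by simp
      then show False using c Oo(3) by blast
    qed
    then obtain j where j: "k = Suc j" by (cases k) auto
    have jnot: "\<pi> ^ j * c \<notin> Oo"
    proof
      assume "\<pi> ^ j * c \<in> Oo"
      then have "k \<le> j" unfolding k_def by (rule Least_le)
      then show False using j by simp
    qed
    define d where "d = \<pi> ^ k * c"
    have dN: "d \<in> N" using kO Oo(3) unfolding d_def by blast
    have "inverse \<pi> * d = \<pi> ^ j * c" unfolding d_def j using pi(3) by (simp add: field_simps)
    then have dD0: "d \<in> D0" unfolding D0_def using dN jnot by simp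
    have "inverse c = \<pi> ^ k * inverse d" unfolding d_def using pi(3) cnz by (simp add: field_simps)
    moreover have "\<pi> ^ k \<in> N" unfolding j by (rule powN)
    ultimately show ?thesis using dD0 by (intro image_eqI[of _ _ "(\<pi> ^ k, inverse d)"]) auto
  qed
  show ?thesis
  proof (intro exI conjI allI impI)
    show "compact ((\<lambda>p. fst p * snd p) ` (N \<times> inverse ` D0) \<union> inverse ` NW)"
      using Q1c Q2c by (rule compact_Un)
    fix c assume c: "c \<notin> W"
    show "inverse c \<in> (\<lambda>p. fst p * snd p) ` (N \<times> inverse ` D0) \<union> inverse ` NW"
    proof (cases "c \<in> N")
      case True then have "c \<in> NW" unfolding NW_def using c by blast
      then show ?thesis by blast
    next
      case False then show ?thesis using main by blast
    qed
  qed
qed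

lemma char_facts:
  assumes psi: "nontrivial_additive_character \<psi>"
  shows "\<psi> 0 = 1" "\<And>x y. \<psi> (x + y) = \<psi> x * \<psi> y" "\<And>x. \<psi> x \<noteq> 0" "\<exists>t. \<psi> t \<noteq> 1"
proof -
  have add: "\<And>x y. \<psi> (x + y) = \<psi> x * \<psi> y" and nrm: "\<And>x. norm (\<psi> x) = 1" and ex: "\<exists>t. \<psi> t \<noteq> 1"
    using psi unfolding nontrivial_additive_character_def by blast+
  show "\<And>x y. \<psi> (x + y) = \<psi> x * \<psi> y" by (rule add)
  show nz: "\<And>x. \<psi> x \<noteq> 0" using nrm by (metis norm_zero zero_neq_one)
  have "\<psi> 0 = \<psi> 0 * \<psi> 0" using add[of 0 0] by simp
  then show "\<psi> 0 = 1" using nz[of 0] by (metis mult_cancel_left1)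
  show "\<exists>t. \<psi> t \<noteq> 1" by (rule ex)
qed

lemma pf_annih:
  fixes V :: "'f::{field,topological_space} set"
  assumes F: "p_adic_field TYPE('f)" and psi: "nontrivial_additive_character \<psi>"
    and V: "open V" "0 \<in> V"
  shows "\<exists>Q. compact Q \<and> (\<forall>b. (\<forall>a\<in>V. \<psi> (b * a) = 1) \<longrightarrow> b \<in> Q)"
proof -
  obtain t where t: "\<psi> t \<noteq> 1" using char_facts(4)[OF psi] by blast
  have tnz: "t \<noteq> 0" using t char_facts(1)[OF psi] by auto
  define W where "W = (\<lambda>s. s * t) -` V"
  have oW: "open W" unfolding W_def by (rule pf_open_vimage[OF pf_cmul(2)[OF F] V(1)])
  have W0: "0 \<in> W" unfolding W_def using V(2) by simp
  obtain Q where Q: "compact Q" "\<forall>c. c \<notin> W \<longrightarrow> inverse c \<in> Q" using pf_bound[OF F oW W0] by blast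
  show ?thesis
  proof (intro exI conjI allI impI)
    show "compact (insert 0 Q)" using Q(1) by (rule compact_insert)
    fix b assume b: "\<forall>a\<in>V. \<psi> (b * a) = 1"
    show "b \<in> insert 0 Q"
    proof (cases "b = 0")
      case False
      have "inverse b \<notin> W"
      proof
        assume "inverse b \<in> W"
        then have "inverse b * t \<in> V" unfolding W_def by simp
        then have "\<psi> (b * (inverse b * t)) = 1" using b by blast
        then show False using t False by (simp add: field_simps)
      qed
      then show ?thesis using Q(2) by (metis inverse_inverse_eq insertI2)
    qed simp
  qed
qed



lemma box_compact:
  fixes Q :: "'f::topological_space set"
  assumes Q: "compact Q"
  shows "compact {w::'f^'m::finite. \<forall>j. w$j \<in> Q}"
proof -
  define P where "P = PiE (UNIV::'m set) (\<lambda>_. Q)"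
  have "compactin (product_topology (\<lambda>_. euclidean) (UNIV::'m set)) P"
    unfolding P_def compactin_PiE using Q by simp
  then have cP: "compact P" by (simp only: euclidean_product_topology compactin_euclidean_iff)
  have cont: "continuous_on P (\<lambda>q::'m\<Rightarrow>'f. \<chi> i. q i)"
    by (rule continuous_on_vec_lambda) (rule continuous_on_subset[OF continuous_on_product_coordinates subset_UNIV])
  have eq: "{w::'f^'m. \<forall>j. w$j \<in> Q} = (\<lambda>q. \<chi> i. q i) ` P"
  proof (intro equalityI subsetI)
      fix w :: "'f^'m"
      assume "w \<in> {w. \<forall>j. w$j \<in> Q}"
      then have "vec_nth w \<in> P" unfolding P_def by (simp add: PiE_iff)
      then show "w \<in> (\<lambda>q. \<chi> i. q i) ` P" by (intro image_eqI[where x="vec_nth w"]) simp_all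
    next
      fix w :: "'f^'m"
      assume "w \<in> (\<lambda>q. \<chi> i. q i) ` P"
      then obtain q where "q \<in> P" "w = (\<chi> i. q i)" by (elim imageE)
      then show "w \<in> {w. \<forall>j. w$j \<in> Q}" unfolding P_def by (simp add: PiE_iff)
  qed
  show ?thesis unfolding eq by (rule compact_continuous_image[OF cont cP])
qed

lemma open_axis:
  fixes L :: "('f::{zero,topological_space}^'m::finite) set"
  assumes L: "open L" "0 \<in> L"
  shows "\<exists>V. open V \<and> 0 \<in> V \<and> (\<forall>j a. a \<in> V \<longrightarrow> axis j a \<in> L)"
proof -
  obtain A where A: "\<forall>i. open (A i) \<and> (0::'f^'m)$i \<in> A i" "\<forall>y. (\<forall>i. y$i \<in> A i) \<longrightarrow> y \<in> L"
    using L unfolding open_vec_def by blast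
  define V where "V = (\<Inter>i. A i)"
  have "open V" unfolding V_def using A(1) by (intro open_INT) auto
  moreover have "0 \<in> V" unfolding V_def using A(1) by simp
  moreover have "axis j a \<in> L" if "a \<in> V" for j a
  proof -
    have "\<forall>i. axis j a $ i \<in> A i" using that A(1) unfolding V_def axis_def by simp
    then show ?thesis using A(2) by blast
  qed
  ultimately show ?thesis by blast
qed

lemma det_cont:
  assumes F: "p_adic_field TYPE('f::{field,topological_space})"
    and c: "\<And>i j. continuous_on S (\<lambda>x. (A x :: 'f^'n::finite^'n) $ i $ j)"
  shows "continuous_on S (\<lambda>x. det (A x))"
  unfolding det_def
proof (rule pf_sum[OF F])
  show "finite {p. p permutes (UNIV::'n set)}" by (simp add: finite_permutations)
  fix p assume "p \<in> {p. p permutes (UNIV::'n set)}"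
  show "continuous_on S (\<lambda>x. of_int (sign p) * (\<Prod>i\<in>UNIV. A x $ i $ p i))"
    by (rule pf_mult[OF F continuous_on_const pf_prod[OF F]]) (simp_all add: c)
qed

lemma pairing_axis:
  fixes M :: "'f::field^'m::finite^'m"
  shows "pairing_of_matrix M z (axis j a) = (transpose M *v z) $ j * a"
proof -
  have "pairing_of_matrix M z (axis j a) = (\<Sum>i\<in>UNIV. z $ i * M $ i $ j * a)"
    unfolding pairing_of_matrix_def axis_def
    by (simp add: if_distrib cong: if_cong)
  also have "\<dots> = (\<Sum>i\<in>UNIV. M $ i $ j * z $ i) * a"
    by (subst sum_distrib_right) (simp add: mult_ac)
  finally show ?thesis by (simp add: matrix_vector_mult_def transpose_def)
qed

lemma key:
  fixes L :: "('f::{field,topological_space}^'m::finite) set" and \<Omega> :: "('f^'m^'m) set"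
  assumes F: "p_adic_field TYPE('f)" and psi: "nontrivial_additive_character \<psi>"
    and L: "open L" "0 \<in> L" and Om: "compact \<Omega>" "\<forall>M\<in>\<Omega>. det M \<noteq> 0"
  shows "\<exists>Z. compact Z \<and> (\<forall>M\<in>\<Omega>. \<forall>z. (\<forall>y\<in>L. \<psi> (pairing_of_matrix M z y) = 1) \<longrightarrow> z \<in> Z)"
proof -
  obtain V :: "'f set" where V: "open V" "0 \<in> V" "\<forall>j a. a \<in> V \<longrightarrow> axis j a \<in> L"
    using open_axis[OF L] by blast
  obtain Q :: "'f set" where Q: "compact Q" "\<forall>b. (\<forall>a\<in>V. \<psi> (b * a) = 1) \<longrightarrow> b \<in> Q"
    using pf_annih[OF F psi V(1,2)] by blast
  define Box where "Box = {w::'f^'m. \<forall>j. w$j \<in> Q}"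
  have cB: "compact Box" unfolding Box_def by (rule box_compact[OF Q(1)])
  define cr where "cr = (\<lambda>p::('f^'m^'m) \<times> ('f^'m). \<chi> k. det (\<chi> i j. if j = k then snd p $ i else transpose (fst p) $ i $ j) * inverse (det (transpose (fst p))))"
  have ccr: "continuous_on (\<Omega> \<times> Box) cr"
    unfolding cr_def
  proof (rule continuous_on_vec_lambda)
    fix k
    show "continuous_on (\<Omega> \<times> Box) (\<lambda>p. det (\<chi> i j. if j = k then snd p $ i else transpose (fst p) $ i $ j) * inverse (det (transpose (fst p))))"
    proof (rule pf_mult[OF F])
      show "continuous_on (\<Omega> \<times> Box) (\<lambda>p. det (\<chi> i j. if j = k then snd p $ i else transpose (fst p) $ i $ j))"
      proof (rule det_cont[OF F])
        fix i j
        show "continuous_on (\<Omega> \<times> Box) (\<lambda>p. (\<chi> i j. if j = k then snd p $ i else transpose (fst p) $ i $ j) $ i $ j)"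
        proof (cases "j = k")
          case True
          then show ?thesis
            by (simp add: continuous_on_component continuous_on_snd continuous_on_id)
        next
          case False
          then show ?thesis
            by (simp add: transpose_def continuous_on_component continuous_on_fst continuous_on_id)
        qed
      qed
      show "continuous_on (\<Omega> \<times> Box) (\<lambda>p. inverse (det (transpose (fst p))))"
      proof (rule pf_inverse[OF F])
        show "continuous_on (\<Omega> \<times> Box) (\<lambda>p. det (transpose (fst p)))"
          by (rule det_cont[OF F]) (simp add: transpose_def continuous_on_component continuous_on_fst continuous_on_id)
        fix p assume "p \<in> \<Omega> \<times> Box"
        then have "fst p \<in> \<Omega>" by (simp add: mem_Times_iff)
        then show "det (transpose (fst p)) \<noteq> 0" using Om(2) by (simp add: det_transpose)
      qed
    qed
  qed
  have cZ: "compact (cr ` (\<Omega> \<times> Box))"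
    by (rule compact_continuous_image[OF ccr compact_Times[OF Om(1) cB]])
  show ?thesis
  proof (intro exI conjI ballI allI impI)
    show "compact (cr ` (\<Omega> \<times> Box))" by (rule cZ)
    fix M z assume M: "M \<in> \<Omega>" and hz: "\<forall>y\<in>L. \<psi> (pairing_of_matrix M z y) = 1"
    define w where "w = transpose M *v z"
    have wB: "w \<in> Box" unfolding Box_def
    proof (intro CollectI allI)
      fix j
      have "\<forall>a\<in>V. \<psi> (w $ j * a) = 1"
      proof
        fix a assume "a \<in> V"
        then have "axis j a \<in> L" using V(3) by blast
        then have "\<psi> (pairing_of_matrix M z (axis j a)) = 1" using hz by blast
        then show "\<psi> (w $ j * a) = 1" unfolding w_def pairing_axis .
      qed
      then show "w $ j \<in> Q" using Q(2) by blast
    qed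
    have dz: "det (transpose M) \<noteq> 0" using Om(2) M by (simp add: det_transpose)
    have "z = (\<chi> k. det(\<chi> i j. if j=k then w$i else transpose M$i$j) / det (transpose M))"
      using cramer[OF dz, of z w] unfolding w_def by simp
    also have "\<dots> = cr (M, w)" unfolding cr_def prod.sel divide_inverse by (rule refl)
    finally have "z = cr (M, w)" .
    moreover have "(M, w) \<in> \<Omega> \<times> Box" using M wB by (rule mem_Sigma_iff[THEN iffD2, OF conjI])
    ultimately show "z \<in> cr ` (\<Omega> \<times> Box)" by (rule image_eqI)
  qed
qed



lemma pairing_tr:
  fixes M :: "'f::field^'m::finite^'m"
  shows "pairing_of_matrix M z y = (\<Sum>j\<in>UNIV. (transpose M *v z) $ j * y $ j)"
proof -
  have "pairing_of_matrix M z y = (\<Sum>j\<in>UNIV. \<Sum>i\<in>UNIV. z $ i * M $ i $ j * y $ j)"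
    unfolding pairing_of_matrix_def by (rule sum.swap)
  also have "\<dots> = (\<Sum>j\<in>UNIV. (\<Sum>i\<in>UNIV. M $ i $ j * z $ i) * y $ j)"
    by (rule sum.cong[OF refl]) (subst sum_distrib_right, simp add: mult_ac)
  finally show ?thesis by (simp add: matrix_vector_mult_def transpose_def)
qed

lemma nondeg_det:
  fixes M :: "'f::field^'m::finite^'m"
  assumes nd: "nondegenerate_pairing (pairing_of_matrix M)"
  shows "det M \<noteq> 0"
proof
  assume d: "det M = 0"
  then have "det (transpose M) = 0" by (simp add: det_transpose)
  then have ni: "\<not> invertible (transpose M)" by (simp add: invertible_det_nz)
  have "\<not> inj ((*v) (transpose M))"
  proof
    assume "inj ((*v) (transpose M))"
    then have "\<exists>B. B ** transpose M = mat 1" by (simp add: matrix_left_invertible_injective)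
    then have "invertible (transpose M)" by (simp add: invertible_left_inverse)
    then show False using ni by simp
  qed
  then obtain z1 z2 :: "'f^'m" where z: "transpose M *v z1 = transpose M *v z2" "z1 \<noteq> z2"
    unfolding inj_def by blast
  define z where "z = z1 - z2"
  have z0: "transpose M *v z = 0" unfolding z_def using z(1) by (simp add: matrix_vector_mult_diff_distrib)
  have "\<forall>y. pairing_of_matrix M z y = 0" unfolding pairing_tr z0 by simp
  then have "z = 0" using nd unfolding nondegenerate_pairing_def by blast
  then show False using z(2) unfolding z_def by simp
qed

lemma bil_zero:
  assumes B: "F_bilinear B"
  shows "B 0 y = 0" "B x 0 = 0"
proof -
  have "B (0 + 0) y = B 0 y + B 0 y" using B unfolding F_bilinear_def by blast
  then have "B 0 y = B 0 y + B 0 y" by (simp only: add_0_left)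
  then show "B 0 y = 0" by (simp only: add_cancel_right_right)
  have "B x (0 + 0) = B x 0 + B x 0" using B unfolding F_bilinear_def by blast
  then have "B x 0 = B x 0 + B x 0" by (simp only: add_0_left)
  then show "B x 0 = 0" by (simp only: add_cancel_right_right)
qed

lemma bil_sum_left:
  assumes B: "F_bilinear B" and fin: "finite I"
  shows "B (\<Sum>i\<in>I. f i) y = (\<Sum>i\<in>I. B (f i) y)"
  using fin
proof (induction I rule: finite_induct)
  case empty then show ?case using bil_zero(1)[OF B] by simp
next
  case (insert a I)
  have "B (f a + (\<Sum>i\<in>I. f i)) y = B (f a) y + B (\<Sum>i\<in>I. f i) y"
    using B unfolding F_bilinear_def by blast
  then show ?case using insert by simp
qed

lemma bil_sum_right:
  assumes B: "F_bilinear B" and fin: "finite I"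
  shows "B x (\<Sum>i\<in>I. f i) = (\<Sum>i\<in>I. B x (f i))"
  using fin
proof (induction I rule: finite_induct)
  case empty then show ?case using bil_zero(2)[OF B] by simp
next
  case (insert a I)
  have "B x (f a + (\<Sum>i\<in>I. f i)) = B x (f a) + B x (\<Sum>i\<in>I. f i)"
    using B unfolding F_bilinear_def by blast
  then show ?case using insert by simp
qed

lemma bil_matrix:
  fixes B :: "'f::field^'m::finite \<Rightarrow> 'f^'m \<Rightarrow> 'f"
  assumes B: "F_bilinear B"
  shows "B = pairing_of_matrix (\<chi> i j. B (axis i 1) (axis j 1))"
proof (intro ext)
  fix x y :: "'f^'m"
  have sl: "\<And>a x y. B (a *s x) y = a * B x y" and sr: "\<And>a x y. B x (a *s y) = a * B x y"
    using B unfolding F_bilinear_def by blast+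
  have "B x y = B (\<Sum>i\<in>UNIV. x$i *s axis i 1) (\<Sum>j\<in>UNIV. y$j *s axis j 1)"
    by (simp only: basis_expansion)
  also have "\<dots> = (\<Sum>j\<in>UNIV. y $ j * (\<Sum>i\<in>UNIV. x $ i * B (axis i 1) (axis j 1)))"
    by (simp only: bil_sum_left[OF B finite] bil_sum_right[OF B finite] sl sr)
  also have "\<dots> = (\<Sum>j\<in>UNIV. \<Sum>i\<in>UNIV. y $ j * (x $ i * B (axis i 1) (axis j 1)))"
    by (simp only: sum_distrib_left)
  also have "\<dots> = (\<Sum>i\<in>UNIV. \<Sum>j\<in>UNIV. y $ j * (x $ i * B (axis i 1) (axis j 1)))"
    by (rule sum.swap)
  also have "\<dots> = pairing_of_matrix (\<chi> i j. B (axis i 1) (axis j 1)) x y"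
    unfolding pairing_of_matrix_def by (simp add: mult_ac)
  finally show "B x y = pairing_of_matrix (\<chi> i j. B (axis i 1) (axis j 1)) x y" .
qed

lemma vec_translate_cont:
  assumes F: "p_adic_field TYPE('f::{field,topological_space})"
  shows "continuous_on S (\<lambda>z::'f^'m::finite. x0 + z)"
proof -
  have eq: "(\<lambda>z::'f^'m. x0 + z) = (\<lambda>z. \<chi> i. x0$i + z$i)"
    by (rule ext) (simp add: vec_eq_iff)
  show ?thesis unfolding eq
    by (intro continuous_on_vec_lambda pf_add[OF F] continuous_on_const continuous_on_component continuous_on_id)
qed



lemma iso_facts:
  assumes G: "group G" and Csub: "subgroup C G" and iso: "top_group_iso_onto G X \<phi> C"
  shows "\<And>x. \<phi> x \<in> C" "\<And>c. c \<in> C \<Longrightarrow> \<exists>x. c = \<phi> x" "\<phi> 0 = \<one>\<^bsub>G\<^esub>"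
    "continuous_map euclidean X \<phi>" "continuous_map euclidean (subtopology X C) \<phi>"
proof -
  have bij: "bij_betw \<phi> UNIV C" and hom: "\<And>x y. \<phi> (x + y) = \<phi> x \<otimes>\<^bsub>G\<^esub> \<phi> y"
    and hm: "homeomorphic_map euclidean (subtopology X C) \<phi>"
    using iso unfolding top_group_iso_onto_def by blast+
  have im: "\<phi> ` UNIV = C" using bij by (simp add: bij_betw_def)
  show mem: "\<And>x. \<phi> x \<in> C" using im by blast
  show "\<And>c. c \<in> C \<Longrightarrow> \<exists>x. c = \<phi> x" using im by blast
  have car: "\<phi> 0 \<in> carrier G" using mem[of 0] subgroup.subset[OF Csub] by blast
  have "\<phi> 0 \<otimes>\<^bsub>G\<^esub> \<phi> 0 = \<phi> 0" using hom[of 0 0] by simp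
  then show "\<phi> 0 = \<one>\<^bsub>G\<^esub>" using group.l_cancel_one[OF G car car] by simp
  show c2: "continuous_map euclidean (subtopology X C) \<phi>" using hm by (rule homeomorphic_imp_continuous_map)
  show "continuous_map euclidean X \<phi>" using c2 by (rule continuous_map_into_fulltopology)
qed

lemma cancel_c: "(c::complex) \<noteq> 0 \<Longrightarrow> c * 1 = c * b \<Longrightarrow> b = 1"
  by simp

theorem mainTheorem6:
  fixes G :: "('g, 'b) monoid_scheme" and X :: "'g topology"
    and \<psi> :: "'f::{field,topological_space} \<Rightarrow> complex"
    and C D :: "'g set"
    and \<phi>C \<phi>D :: "'f^'m::finite \<Rightarrow> 'g"
  assumes F: "p_adic_field TYPE('f)"
    and psi: "nontrivial_additive_character \<psi>"
    and G0: "lctd_group G X"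
    and C: "subgroup C G" "closedin X C" "top_group_iso_onto G X \<phi>C C"
    and D: "subgroup D G" "closedin X D" "top_group_iso_onto G X \<phi>D D"
  shows
    "(\<forall>(B :: 'f^'m \<Rightarrow> 'f^'m \<Rightarrow> 'f) chi (f :: 'g \<Rightarrow> complex).
        F_bilinear B \<longrightarrow> nondegenerate_pairing B \<longrightarrow>
        continuous_character G X D chi \<longrightarrow>
        (\<exists>K. open_compact_subgroup G X K \<and> right_invariant G K f) \<longrightarrow>
        (\<forall>x y. f (\<phi>C x \<otimes>\<^bsub>G\<^esub> \<phi>D y) = f (\<phi>C x) * chi (\<phi>D y) * \<psi> (B x y)) \<longrightarrow>
        (\<exists>S. S \<subseteq> C \<and> compactin X S \<and> {c \<in> C. f c \<noteq> 0} \<subseteq> S))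
     \<and>
     (\<forall>K0 (\<Omega> :: ('f^'m^'m) set) U.
        open_compact_subgroup G X K0 \<longrightarrow>
        compact \<Omega> \<longrightarrow> (\<forall>M\<in>\<Omega>. nondegenerate_pairing (pairing_of_matrix M)) \<longrightarrow>
        U \<subseteq> D \<longrightarrow> subgroup U G \<longrightarrow> openin (subtopology X D) U \<longrightarrow> compactin X U \<longrightarrow>
        (\<exists>S. S \<subseteq> C \<and> compactin X S \<and>
          (\<forall>M\<in>\<Omega>. \<forall>chi (f :: 'g \<Rightarrow> complex).
             continuous_character G X D chi \<longrightarrow> (\<forall>u\<in>U. chi u = 1) \<longrightarrow>
             right_invariant G K0 f \<longrightarrow>
             (\<forall>x y. f (\<phi>C x \<otimes>\<^bsub>G\<^esub> \<phi>D y) = f (\<phi>C x) * chi (\<phi>D y) * \<psi> (pairing_of_matrix M x y)) \<longrightarrow>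
             {c \<in> C. f c \<noteq> 0} \<subseteq> S)))"
proof -
  have grp: "group G" using G0 unfolding lctd_group_def by blast
  note FC = iso_facts[OF grp C(1) C(3)]
  note FD = iso_facts[OF grp D(1) D(3)]
  have Ccar: "\<And>x. \<phi>C x \<in> carrier G" using FC(1) subgroup.subset[OF C(1)] by blast
  have Dcar: "\<And>x. \<phi>D x \<in> carrier G" using FD(1) subgroup.subset[OF D(1)] by blast
  have psi0: "\<And>x. \<psi> x \<noteq> 0" by (rule char_facts(3)[OF psi])
  have psiadd: "\<And>x y. \<psi> (x + y) = \<psi> x * \<psi> y" by (rule char_facts(2)[OF psi])
  have imgC: "compactin X (\<phi>C ` Z) \<and> \<phi>C ` Z \<subseteq> C" if "compact Z" for Z
  proof
    show "compactin X (\<phi>C ` Z)"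
      by (rule image_compactin[OF _ FC(4)]) (simp add: that)
    show "\<phi>C ` Z \<subseteq> C" using FC(1) by blast
  qed
  show ?thesis
  proof (intro conjI allI impI)
    fix B :: "'f^'m \<Rightarrow> 'f^'m \<Rightarrow> 'f" and chi and f :: "'g \<Rightarrow> complex"
    assume Bb: "F_bilinear B" and nd: "nondegenerate_pairing B"
      and chi: "continuous_character G X D chi"
      and Kex: "\<exists>K. open_compact_subgroup G X K \<and> right_invariant G K f"
      and hf: "\<forall>x y. f (\<phi>C x \<otimes>\<^bsub>G\<^esub> \<phi>D y) = f (\<phi>C x) * chi (\<phi>D y) * \<psi> (B x y)"
    obtain K :: "'g set" where K: "open_compact_subgroup G X K" "right_invariant G K f" using Kex by blast
    have Ksub: "subgroup K G" and Kop: "openin X K" using K(1) unfolding open_compact_subgroup_def by blast+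
    define MB where "MB = (\<chi> i j. B (axis i 1) (axis j 1))"
    have Beq: "B = pairing_of_matrix MB" unfolding MB_def by (rule bil_matrix[OF Bb])
    have dMB: "det MB \<noteq> 0" using nd unfolding Beq by (rule nondeg_det)
    define L where "L = \<phi>D -` K"
    have "openin euclidean {x \<in> topspace euclidean. \<phi>D x \<in> K}"
      by (rule openin_continuous_map_preimage[OF FD(4) Kop])
    then have Lop: "open L" unfolding L_def by (simp add: vimage_def)
    have L0: "0 \<in> L" unfolding L_def using FD(3) subgroup.one_closed[OF Ksub] by simp
    obtain Z :: "('f^'m) set" where Z: "compact Z"
      "\<forall>M\<in>{MB}. \<forall>z. (\<forall>y\<in>L. \<psi> (pairing_of_matrix M z y) = 1) \<longrightarrow> z \<in> Z"
      using key[OF F psi Lop L0 compact_sing, of MB] dMB by blast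
    have chinz: "chi (\<phi>D y) \<noteq> 0" for y
    proof -
      have "norm (chi (\<phi>D y)) = 1" using chi FD(1) unfolding continuous_character_def by blast
      then show ?thesis by auto
    qed
    have rel: "chi (\<phi>D y) * \<psi> (B x y) = 1" if fx: "f (\<phi>C x) \<noteq> 0" and y: "y \<in> L" for x y
    proof -
      have "\<phi>D y \<in> K" using y unfolding L_def by simp
      then have "f (\<phi>C x \<otimes>\<^bsub>G\<^esub> \<phi>D y) = f (\<phi>C x)"
        using K(2) Ccar unfolding right_invariant_def by blast
      then have "f (\<phi>C x) * 1 = f (\<phi>C x) * (chi (\<phi>D y) * \<psi> (B x y))" using hf by (simp add: mult.assoc)
      then show ?thesis by (rule cancel_c[OF fx])
    qed
    show "\<exists>S. S \<subseteq> C \<and> compactin X S \<and> {c \<in> C. f c \<noteq> 0} \<subseteq> S"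
    proof (cases "{c \<in> C. f c \<noteq> 0} = {}")
      case True
      then show ?thesis by (intro exI[of _ "{}"]) simp
    next
      case False
      then obtain c0 where c0: "c0 \<in> C" "f c0 \<noteq> 0" by blast
      then obtain x0 where x0: "c0 = \<phi>C x0" using FC(2) by blast
      have fx0: "f (\<phi>C x0) \<noteq> 0" using c0(2) x0 by simp
      have diff: "x - x0 \<in> Z" if fx: "f (\<phi>C x) \<noteq> 0" for x
      proof -
        have "\<forall>y\<in>L. \<psi> (pairing_of_matrix MB (x - x0) y) = 1"
        proof
          fix y assume y: "y \<in> L"
          have e1: "chi (\<phi>D y) * \<psi> (B x y) = chi (\<phi>D y) * \<psi> (B x0 y)"
            using rel[OF fx y] rel[OF fx0 y] by simp
          then have e2: "\<psi> (B x y) = \<psi> (B x0 y)" using chinz[of y] by simp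
          have "B x y = B (x0 + (x - x0)) y" by simp
          also have "\<dots> = B x0 y + B (x - x0) y" using Bb unfolding F_bilinear_def by blast
          finally have "\<psi> (B x y) = \<psi> (B x0 y) * \<psi> (B (x - x0) y)" using psiadd by simp
          then have "\<psi> (B x0 y) * 1 = \<psi> (B x0 y) * \<psi> (B (x - x0) y)" using e2 by simp
          then have "\<psi> (B (x - x0) y) = 1" by (rule cancel_c[OF psi0[of "B x0 y"]])
          then show "\<psi> (pairing_of_matrix MB (x - x0) y) = 1" unfolding Beq .
        qed
        then show ?thesis using Z(2) by blast
      qed
      define Z' where "Z' = (\<lambda>z. x0 + z) ` Z"
      have cZ': "compact Z'" unfolding Z'_def
        by (rule compact_continuous_image[OF vec_translate_cont[OF F] Z(1)])
      show ?thesis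
      proof (intro exI conjI)
        show "\<phi>C ` Z' \<subseteq> C" "compactin X (\<phi>C ` Z')" using imgC[OF cZ'] by blast+
        show "{c \<in> C. f c \<noteq> 0} \<subseteq> \<phi>C ` Z'"
        proof
          fix c assume "c \<in> {c \<in> C. f c \<noteq> 0}"
          then have c: "c \<in> C" "f c \<noteq> 0" by blast+
          then obtain x where x: "c = \<phi>C x" using FC(2) by blast
          have "x - x0 \<in> Z" using diff c(2) x by simp
          then have "x0 + (x - x0) \<in> Z'" unfolding Z'_def by (rule imageI)
          then have "x \<in> Z'" by simp
          then show "c \<in> \<phi>C ` Z'" using x by (rule rev_image_eqI)
        qed
      qed
    qed
  next
    fix K0 :: "'g set" and \<Omega> :: "('f^'m^'m) set" and U :: "'g set"
    assume K0: "open_compact_subgroup G X K0" and Om: "compact \<Omega>"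
      and ndO: "\<forall>M\<in>\<Omega>. nondegenerate_pairing (pairing_of_matrix M)"
      and UD: "U \<subseteq> D" and Usub: "subgroup U G" and Uop: "openin (subtopology X D) U"
      and Ucp: "compactin X U"
    have K0sub: "subgroup K0 G" and K0op: "openin X K0" using K0 unfolding open_compact_subgroup_def by blast+
    define L where "L = \<phi>D -` K0 \<inter> \<phi>D -` U"
    have "openin euclidean {x \<in> topspace euclidean. \<phi>D x \<in> K0}"
      by (rule openin_continuous_map_preimage[OF FD(4) K0op])
    moreover have "openin euclidean {x \<in> topspace euclidean. \<phi>D x \<in> U}"
      by (rule openin_continuous_map_preimage[OF FD(5) Uop])
    ultimately have Lop: "open L" unfolding L_def by (simp add: vimage_def open_Int)
    have L0: "0 \<in> L" unfolding L_def using FD(3) subgroup.one_closed[OF K0sub] subgroup.one_closed[OF Usub] by simp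
    have dO: "\<forall>M\<in>\<Omega>. det M \<noteq> 0" using ndO nondeg_det by blast
    obtain Z :: "('f^'m) set" where Z: "compact Z"
      "\<forall>M\<in>\<Omega>. \<forall>z. (\<forall>y\<in>L. \<psi> (pairing_of_matrix M z y) = 1) \<longrightarrow> z \<in> Z"
      using key[OF F psi Lop L0 Om dO] by blast
    show "\<exists>S. S \<subseteq> C \<and> compactin X S \<and>
          (\<forall>M\<in>\<Omega>. \<forall>chi (f :: 'g \<Rightarrow> complex).
             continuous_character G X D chi \<longrightarrow> (\<forall>u\<in>U. chi u = 1) \<longrightarrow>
             right_invariant G K0 f \<longrightarrow>
             (\<forall>x y. f (\<phi>C x \<otimes>\<^bsub>G\<^esub> \<phi>D y) = f (\<phi>C x) * chi (\<phi>D y) * \<psi> (pairing_of_matrix M x y)) \<longrightarrow>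
             {c \<in> C. f c \<noteq> 0} \<subseteq> S)"
    proof (intro exI conjI ballI allI impI)
      show "\<phi>C ` Z \<subseteq> C" "compactin X (\<phi>C ` Z)" using imgC[OF Z(1)] by blast+
      fix M chi and f :: "'g \<Rightarrow> complex"
      assume M: "M \<in> \<Omega>" and chi: "continuous_character G X D chi" and chiU: "\<forall>u\<in>U. chi u = 1"
        and rinv: "right_invariant G K0 f"
        and hf: "\<forall>x y. f (\<phi>C x \<otimes>\<^bsub>G\<^esub> \<phi>D y) = f (\<phi>C x) * chi (\<phi>D y) * \<psi> (pairing_of_matrix M x y)"
      show "{c \<in> C. f c \<noteq> 0} \<subseteq> \<phi>C ` Z"
      proof
        fix c assume "c \<in> {c \<in> C. f c \<noteq> 0}"
        then have c: "c \<in> C" "f c \<noteq> 0" by blast+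
        then obtain x where x: "c = \<phi>C x" using FC(2) by blast
        have fx: "f (\<phi>C x) \<noteq> 0" using c(2) x by simp
        have "\<forall>y\<in>L. \<psi> (pairing_of_matrix M x y) = 1"
        proof
          fix y assume y: "y \<in> L"
          have yK: "\<phi>D y \<in> K0" and yU: "\<phi>D y \<in> U" using y unfolding L_def by simp_all
          have "f (\<phi>C x \<otimes>\<^bsub>G\<^esub> \<phi>D y) = f (\<phi>C x)"
            using rinv Ccar yK unfolding right_invariant_def by blast
          moreover have "chi (\<phi>D y) = 1" using chiU yU by blast
          ultimately have "f (\<phi>C x) * 1 = f (\<phi>C x) * \<psi> (pairing_of_matrix M x y)" using hf by simp
          then show "\<psi> (pairing_of_matrix M x y) = 1" by (rule cancel_c[OF fx])
        qed
        then have "x \<in> Z" using Z(2) M by blast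
        then show "c \<in> \<phi>C ` Z" using x by (rule rev_image_eqI)
      qed
    qed
  qed
qed

end
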